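(* Let $\Omega$ be the sojourn time of an arbitrary batch in the stationary regime, i.e. the random variable whose Laplace transform is $$\mathbb{E}(e^{-s\Omega})=\sum_{n=0}^\infty\sum_{b=1}^\infty e^*_{n,b}(s)\,\mathbb{P}(N=n)\,\mathbb{P}(B=b),$$ where $B$ is the geometric batch size and $N$ (independent of $B$) has the stationary distribution $\mathbb{P}(N=0)=1-\frac{\rho}{1-q}$ and $\mathbb{P}(N=n)=\left(1-\frac{\rho}{1-q}\right)\rho(\rho+q)^{n-1}$ for $n\ge1$. Then for $\Re(s)\ge0$, $$\mathbb{E}(e^{-s\Omega})=\frac{1-\rho-q}{q(\rho+q)}\left(\rho^2F(s;\rho+q,q)+\frac{q^3+\rho\,(qs+\rho+2q(1-q))\,E(s;q,q)}{q+\rho+qs-q^2}\right).$$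
   Context: Queueing model: an $M^{[X]}/M/1$ processor-sharing queue. Batches of jobs arrive according to a Poisson process with rate $\rho>0$; each job requires an exponentially distributed amount of service with mean $1$; the server has unit capacity, shared equally among all jobs present (processor sharing); interarrival times, batch sizes and service requirements are mutually independent. Batch sizes are geometric: $\mathbb{P}(B=b)=(1-q)q^{b-1}$, $b\ge1$, where $q\in(0,1)$ and $\rho+q<1$. For $n\ge0$, $b\ge1$, $\Omega_{n,b}$ denotes the sojourn time of a tagged batch (time between its arrival and the departure of the last of its jobs) given that $n$ jobs are in the system at its arrival and that the batch contains $b$ jobs, and $e^*_{n,b}(s)=\mathbb{E}(e^{-s\Omega_{n,b}})$ for $\Re(s)\ge0$. Let $\mathbb{D}=\{u\in\mathbb{C}:|u|<1\}$ and $E(s;u,v)=\sum_{n\ge0}\sum_{b\ge1}e^*_{n,b}(s)u^nv^b$ for $(u,v)\in\mathbb{D}^2$. Define $F(s;u,v)=\frac{E(s;u,v)-E(s;q,v)}{u-q}$ for $u\in\mathbb{D}\setminus\{q\}$ and $F(s;q,v)=\frac{\partial E}{\partial u}(s;q,v)$. *)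

theory Defs
  imports "HOL-Analysis.Analysis"
begin

(* Tagged-batch dynamics as a continuous-time Markov chain on states (n,b):
   n = number of other jobs, b = remaining jobs of the tagged batch.
   While b >= 1 the system is nonempty, so the total event rate is constant, 1 + rho:
   batch arrivals at rate rho (size j+1 with prob (1-q) q^j), departures at rate 1
   (processor sharing, exp(1) jobs); a departure is a tagged job with prob b/(n+b).
   Hence Omega_{n,b} = sum of K i.i.d. Exp(1+rho) holding times, K = number of jumps of the
   embedded chain until b = 0.  absorb_prob rho q k n b = P(K = k | start (n,b)). *)

primrec absorb_prob :: "real \<Rightarrow> real \<Rightarrow> nat \<Rightarrow> nat \<Rightarrow> nat \<Rightarrow> real" where
  "absorb_prob \<rho> q 0 n b = (if b = 0 then 1 else 0)"
| "absorb_prob \<rho> q (Suc k) n b =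
     (if b = 0 then 0 else
        \<rho> / (1 + \<rho>) * (\<Sum>j. (1 - q) * q ^ j * absorb_prob \<rho> q k (n + Suc j) b)
      + 1 / (1 + \<rho>) * (real b / real (n + b) * absorb_prob \<rho> q k n (b - 1)
                         + real n / real (n + b) * absorb_prob \<rho> q k (n - 1) b))"

(* e*_{n,b}(s) = E(exp(-s Omega_{n,b})) *)
definition estar :: "real \<Rightarrow> real \<Rightarrow> nat \<Rightarrow> nat \<Rightarrow> complex \<Rightarrow> complex" where
  "estar \<rho> q n b s =
     (\<Sum>k. complex_of_real (absorb_prob \<rho> q k n b) * (complex_of_real (1 + \<rho>) / (complex_of_real (1 + \<rho>) + s)) ^ k)"

definition Egf :: "real \<Rightarrow> real \<Rightarrow> complex \<Rightarrow> complex \<Rightarrow> complex \<Rightarrow> complex" where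
  "Egf \<rho> q s u v = (\<Sum>n. \<Sum>b. estar \<rho> q n (Suc b) s * u ^ n * v ^ Suc b)"

definition Fgf :: "real \<Rightarrow> real \<Rightarrow> complex \<Rightarrow> complex \<Rightarrow> complex \<Rightarrow> complex" where
  "Fgf \<rho> q s u v =
     (if u = complex_of_real q then deriv (\<lambda>w. Egf \<rho> q s w v) (complex_of_real q)
      else (Egf \<rho> q s u v - Egf \<rho> q s (complex_of_real q) v) / (u - complex_of_real q))"

definition batch_pmf :: "real \<Rightarrow> nat \<Rightarrow> real" where
  "batch_pmf q b = (if b = 0 then 0 else (1 - q) * q ^ (b - 1))"

definition stat_pmf :: "real \<Rightarrow> real \<Rightarrow> nat \<Rightarrow> real" where
  "stat_pmf \<rho> q n = (if n = 0 then 1 - \<rho> / (1 - q)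
                       else (1 - \<rho> / (1 - q)) * \<rho> * (\<rho> + q) ^ (n - 1))"

definition stat_LT :: "real \<Rightarrow> real \<Rightarrow> complex \<Rightarrow> complex" where
  "stat_LT \<rho> q s = (\<Sum>n. \<Sum>b. estar \<rho> q n (Suc b) s
       * complex_of_real (stat_pmf \<rho> q n) * complex_of_real (batch_pmf q (Suc b)))"

end

theory Submission
  imports Defs
begin


lemma infsum_suminf_nat:
  fixes x :: "nat \<Rightarrow> complex"
  assumes "x summable_on UNIV"
  shows "infsum x UNIV = suminf x"
  using assms has_sum_imp_sums sums_unique summable_iff_has_sum_infsum by metis

lemma swap_suminf:
  fixes f :: "nat \<Rightarrow> nat \<Rightarrow> complex" and g :: "nat \<Rightarrow> nat \<Rightarrow> real"
  assumes fg: "\<And>i j. norm (f i j) \<le> g i j" and gs: "\<And>i. summable (g i)"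
    and gss: "summable (\<lambda>i. suminf (g i))"
  shows "(\<Sum>i. \<Sum>j. f i j) = (\<Sum>j. \<Sum>i. f i j)"
proof -
  have g0: "g i j \<ge> 0" for i j using fg[of i j] norm_ge_zero order_trans by blast
  have gi: "infsum (g i) UNIV = suminf (g i)" for i
    using sums_nonneg_imp_has_sum[OF summable_sums[OF gs[of i]]] g0 infsumI by blast
  have gsum: "(\<lambda>p. norm (g (fst p) (snd p))) summable_on Sigma UNIV (\<lambda>_. UNIV)"
      unfolding Infinite_Sum.abs_summable_on_Sigma_iff
    proof (intro conjI ballI)
      fix i :: nat
      show "(\<lambda>j. norm (g (fst (i, j)) (snd (i, j)))) summable_on UNIV"
        using summable_nonneg_imp_summable_on[of "\<lambda>j. norm (g i j)"] gs[of i] g0 by simp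
    next
      have eq: "\<And>i. infsum (\<lambda>j. norm (g i j)) UNIV = suminf (g i)"
        using gi g0 by simp
      moreover have "(\<lambda>i. norm (suminf (g i))) summable_on UNIV"
        using summable_nonneg_imp_summable_on[of "\<lambda>i. norm (suminf (g i))"] gss g0 gs
        by (simp add: suminf_nonneg)
      ultimately show "(\<lambda>i. norm (\<Sum>\<^sub>\<infinity>j\<in>UNIV. norm (g (fst (i, j)) (snd (i, j))))) summable_on UNIV"
        by (simp only: fst_conv snd_conv eq)
    qed
  have fsum: "(\<lambda>(i,j). f i j) summable_on (UNIV \<times> UNIV)"
    apply (subst summable_on_iff_abs_summable_on_complex)
    apply (rule Infinite_Sum.abs_summable_on_comparison_test[where g="\<lambda>p. g (fst p) (snd p)"])
    using gsum apply simp
    apply clarsimp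
    subgoal for i j using fg[of i j] g0[of i j] by simp
    done
  have fsum': "(\<lambda>(j,i). f i j) summable_on (UNIV \<times> UNIV)"
    using fsum summable_on_swap[of "\<lambda>(i,j). f i j" UNIV UNIV] by simp
  have A: "(\<lambda>i. infsum (f i) UNIV) summable_on UNIV"
    using summable_on_Sigma_banach[of f UNIV "\<lambda>_. UNIV"] fsum by simp
  have B: "(\<lambda>j. infsum (\<lambda>i. f i j) UNIV) summable_on UNIV"
    using summable_on_Sigma_banach[of "\<lambda>j i. f i j" UNIV "\<lambda>_. UNIV"] fsum' by simp
  have fi: "f i summable_on UNIV" for i
    by (rule norm_summable_imp_summable_on, rule summable_comparison_test'[OF gs[of i]]) (use fg in auto)
  have fj: "(\<lambda>i. f i j) summable_on UNIV" for j
  proof (rule norm_summable_imp_summable_on, rule summable_comparison_test'[OF gss])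
    fix i show "norm (norm (f i j)) \<le> suminf (g i)"
      using fg[of i j] sum_le_suminf[OF gs[of i], of "{j}"] g0 by force
  qed
  have "(\<Sum>i. \<Sum>j. f i j) = infsum (\<lambda>i. infsum (\<lambda>j. f i j) UNIV) UNIV"
    using infsum_suminf_nat[OF A] infsum_suminf_nat[OF fi] by simp
  also have "\<dots> = infsum (\<lambda>j. infsum (\<lambda>i. f i j) UNIV) UNIV"
    by (rule infsum_swap_banach) (use fsum in simp)
  also have "\<dots> = (\<Sum>j. \<Sum>i. f i j)"
    using infsum_suminf_nat[OF B] infsum_suminf_nat[OF fj] by simp
  finally show ?thesis .
qed



lemma geo_w: assumes "0 \<le> q" "q < (1::real)" shows "(\<lambda>j. (1-q)*q^j) sums 1"
proof -
  have "(\<lambda>j. q^j) sums (1/(1-q))" using geometric_sums[of q] assms by simp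
  from sums_mult[OF this, of "1-q"] show ?thesis using assms by simp
qed

lemma wavg:
  fixes a :: "nat \<Rightarrow> real"
  assumes "0 \<le> q" "q < 1" "\<And>j. 0 \<le> a j" "\<And>j. a j \<le> 1"
  shows "summable (\<lambda>j. (1-q)*q^j*a j)" "0 \<le> (\<Sum>j. (1-q)*q^j*a j)" "(\<Sum>j. (1-q)*q^j*a j) \<le> 1"
proof -
  have g: "(\<lambda>j. (1-q)*q^j) sums 1" by (rule geo_w) (use assms in auto)
  have le: "norm ((1-q)*q^j*a j) \<le> (1-q)*q^j" for j
    using assms(1,2) assms(3,4)[of j] by (simp add: abs_mult mult_left_le)
  show s: "summable (\<lambda>j. (1-q)*q^j*a j)"
    by (rule summable_comparison_test'[OF sums_summable[OF g] le])
  show "0 \<le> (\<Sum>j. (1-q)*q^j*a j)" by (rule suminf_nonneg[OF s]) (use assms in auto)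
  have "(\<Sum>j. (1-q)*q^j*a j) \<le> (\<Sum>j. (1-q)*q^j)"
    by (rule suminf_le[OF _ s sums_summable[OF g]]) (use assms(1,2) assms(4) in \<open>auto intro: mult_left_le\<close>)
  then show "(\<Sum>j. (1-q)*q^j*a j) \<le> 1" using sums_unique[OF g] by simp
qed

lemma mix_le1:
  fixes \<rho> S x :: real
  assumes "\<rho> > 0" "S \<le> 1" "x \<le> 1"
  shows "\<rho>/(1+\<rho>)*S + 1/(1+\<rho>)*x \<le> 1"
proof -
  have "\<rho>*S \<le> \<rho>*1" by (rule mult_left_mono) (use assms in auto)
  then have "\<rho>*S + x \<le> 1 + \<rho>" using assms by linarith
  moreover have "\<rho>/(1+\<rho>)*S + 1/(1+\<rho>)*x = (\<rho>*S + x)/(1+\<rho>)"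
    by (simp add: add_divide_distrib)
  moreover have "1+\<rho> > 0" using assms by simp
  ultimately show ?thesis by (simp add: pos_divide_le_eq)
qed

lemma cvx_le1:
  fixes x y :: real
  assumes "x \<le> 1" "y \<le> 1" "0 \<le> x" "0 \<le> y" "b > 0"
  shows "real b/real (n+b)*x + real n/real (n+b)*y \<le> 1"
proof -
  have "real b*x + real n*y \<le> real b + real n" using assms
    by (intro add_mono) (auto intro: mult_left_le)
  moreover have "real b/real (n+b)*x + real n/real (n+b)*y = (real b*x + real n*y)/real (n+b)"
    by (simp add: add_divide_distrib)
  moreover have "real (n+b) > 0" using assms by simp
  ultimately show ?thesis by (simp add: pos_divide_le_eq)
qed

lemma P_bounds:
  assumes "\<rho> > 0" "0 \<le> q" "q < 1"
  shows "0 \<le> absorb_prob \<rho> q k n b \<and> absorb_prob \<rho> q k n b \<le> 1"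
proof (induction k arbitrary: n b)
  case 0 then show ?case by simp
next
  case (Suc k)
  show ?case
  proof (cases "b = 0")
    case True then show ?thesis by simp
  next
    case False
    define S where "S = (\<Sum>j. (1 - q) * q ^ j * absorb_prob \<rho> q k (n + Suc j) b)"
    have S: "0 \<le> S" "S \<le> 1" unfolding S_def using wavg[of q "\<lambda>j. absorb_prob \<rho> q k (n + Suc j) b"] Suc assms by auto
    define x where "x = real b / real (n + b) * absorb_prob \<rho> q k n (b - 1)
                         + real n / real (n + b) * absorb_prob \<rho> q k (n - 1) b"
    have x: "0 \<le> x" "x \<le> 1" unfolding x_def using Suc False cvx_le1 by auto
    have "absorb_prob \<rho> q (Suc k) n b = \<rho>/(1+\<rho>)*S + 1/(1+\<rho>)*x"
      using False by (simp add: S_def x_def)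
    then show ?thesis using S x assms mix_le1[of \<rho> S x] by simp
  qed
qed




lemma P_partial:
  assumes "\<rho> > 0" "0 \<le> q" "q < 1"
  shows "(\<Sum>k<K. absorb_prob \<rho> q k n b) \<le> 1"
proof (induction K arbitrary: n b)
  case 0 then show ?case by simp
next
  case (Suc K)
  note Pb = P_bounds[OF assms]
  show ?case
  proof (cases "b = 0")
    case True
    then show ?thesis by (simp add: sum.lessThan_Suc_shift del: sum.lessThan_Suc)
  next
    case False
    have sm: "summable (\<lambda>j. (1 - q) * q ^ j * absorb_prob \<rho> q k (n + Suc j) b)" for k
      using wavg(1)[of q "\<lambda>j. absorb_prob \<rho> q k (n + Suc j) b"] Pb assms by auto
    define S where "S = (\<Sum>k<K. (\<Sum>j. (1 - q) * q ^ j * absorb_prob \<rho> q k (n + Suc j) b))"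
    have S_eq: "S = (\<Sum>j. (1 - q) * q ^ j * (\<Sum>k<K. absorb_prob \<rho> q k (n + Suc j) b))"
      unfolding S_def by (subst suminf_sum[symmetric]) (use sm in \<open>auto simp: sum_distrib_left\<close>)
    have S: "S \<le> 1" unfolding S_eq
      by (rule wavg(3)) (use Suc.IH Pb assms in \<open>auto intro: sum_nonneg\<close>)
    define x where "x = real b / real (n + b) * (\<Sum>k<K. absorb_prob \<rho> q k n (b - 1))
                         + real n / real (n + b) * (\<Sum>k<K. absorb_prob \<rho> q k (n - 1) b)"
    have x: "x \<le> 1" unfolding x_def using Suc.IH False Pb
      by (intro cvx_le1) (auto intro: sum_nonneg)
    have "(\<Sum>k<Suc K. absorb_prob \<rho> q k n b) = (\<Sum>k<K. absorb_prob \<rho> q (Suc k) n b)"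
      using False by (simp add: sum.lessThan_Suc_shift del: sum.lessThan_Suc)
    also have "\<dots> = \<rho>/(1+\<rho>)*S + 1/(1+\<rho>)*x"
      using False by (simp add: S_def x_def sum.distrib sum_distrib_left add_divide_distrib sum_divide_distrib)
    finally show ?thesis using S x assms mix_le1[of \<rho> S x] by simp
  qed
qed

lemma P_summable:
  assumes "\<rho> > 0" "0 \<le> q" "q < 1"
  shows "summable (\<lambda>k. absorb_prob \<rho> q k n b)" "(\<Sum>k. absorb_prob \<rho> q k n b) \<le> 1"
proof -
  show s: "summable (\<lambda>k. absorb_prob \<rho> q k n b)"
    by (rule summableI_nonneg_bounded[where x=1]) (use P_bounds[OF assms] P_partial[OF assms] in auto)
  show "(\<Sum>k. absorb_prob \<rho> q k n b) \<le> 1"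
    by (rule suminf_le_const[OF s]) (use P_partial[OF assms] in auto)
qed





definition Rw :: "real \<Rightarrow> real \<Rightarrow> complex \<Rightarrow> complex \<Rightarrow> complex \<Rightarrow> nat \<Rightarrow> complex" where
  "Rw \<rho> q s u v n = (\<Sum>b. estar \<rho> q n (Suc b) s * u ^ n * v ^ Suc b)"

lemma Egf_Rw: "Egf \<rho> q s u v = suminf (Rw \<rho> q s u v)"
  unfolding Egf_def Rw_def ..

context
  fixes \<rho> q :: real and s :: complex
  assumes rho: "\<rho> > 0" and q0: "0 < q" and q1: "q < 1" and res: "Re s \<ge> 0"
begin

abbreviation "zz \<equiv> complex_of_real (1 + \<rho>) / (complex_of_real (1 + \<rho>) + s)"

lemma den_ge: "norm (complex_of_real (1 + \<rho>) + s) \<ge> 1 + \<rho>"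
proof -
  have "Re (complex_of_real (1 + \<rho>) + s) \<ge> 1 + \<rho>" using res by simp
  then show ?thesis using abs_Re_le_cmod[of "complex_of_real (1 + \<rho>) + s"] by linarith
qed

lemma den_nz: "complex_of_real (1 + \<rho>) + s \<noteq> 0"
proof
  assume "complex_of_real (1 + \<rho>) + s = 0"
  then have "norm (complex_of_real (1 + \<rho>) + s) = 0" by (simp only: norm_zero)
  with den_ge rho show False by linarith
qed

lemma zz_le: "norm zz \<le> 1"
proof -
  have "norm zz = norm (complex_of_real (1 + \<rho>)) / norm (complex_of_real (1 + \<rho>) + s)"
    by (rule norm_divide)
  also have "norm (complex_of_real (1 + \<rho>)) = 1 + \<rho>"
    by (subst norm_of_real) (use rho in simp)
  also have "(1 + \<rho>) / norm (complex_of_real (1 + \<rho>) + s) \<le> 1"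
  proof -
    have pos: "norm (complex_of_real (1 + \<rho>) + s) > 0" using den_ge rho by linarith
    show ?thesis by (subst divide_le_eq_1_pos[OF pos]) (rule den_ge)
  qed
  finally show ?thesis .
qed

lemma term_le: "norm (complex_of_real (absorb_prob \<rho> q k n b) * zz ^ k) \<le> absorb_prob \<rho> q k n b"
proof -
  have "norm (complex_of_real (absorb_prob \<rho> q k n b) * zz ^ k) = absorb_prob \<rho> q k n b * norm zz ^ k"
    using P_bounds[of \<rho> q k n b] rho q0 q1 by (simp add: norm_mult norm_power)
  also have "\<dots> \<le> absorb_prob \<rho> q k n b * 1"
    using P_bounds[of \<rho> q k n b] rho q0 q1 zz_le
    by (intro mult_left_mono) (auto intro: power_le_one)
  finally show ?thesis by simp
qed

lemma estar_summable: "summable (\<lambda>k. norm (complex_of_real (absorb_prob \<rho> q k n b) * zz ^ k))"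
  by (rule summable_comparison_test'[OF P_summable(1)[of \<rho> q n b]]) (use rho q0 q1 term_le in auto)

lemma estar_le: "norm (estar \<rho> q n b s) \<le> 1"
proof -
  have "norm (estar \<rho> q n b s) \<le> (\<Sum>k. norm (complex_of_real (absorb_prob \<rho> q k n b) * zz ^ k))"
    unfolding estar_def by (rule summable_norm[OF estar_summable])
  also have "\<dots> \<le> (\<Sum>k. absorb_prob \<rho> q k n b)"
    by (rule suminf_le[OF _ estar_summable P_summable(1)]) (use rho q0 q1 term_le in auto)
  also have "\<dots> \<le> 1" using P_summable(2) rho q0 q1 by auto
  finally show ?thesis .
qed

lemma estar_0: "estar \<rho> q n 0 s = 1"
proof -
  have "(\<lambda>k. complex_of_real (absorb_prob \<rho> q k n 0) * zz ^ k) = (\<lambda>k. if k = 0 then 1 else 0)"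
    by (rule ext) (case_tac k, auto)
  then show ?thesis unfolding estar_def using sums_single[of 0 "\<lambda>_. 1::complex"] sums_unique
    by (metis (no_types, lifting) sums_single)
qed


lemma norm_ofreal_zz: "a \<ge> 0 \<Longrightarrow> norm (complex_of_real a * zz ^ k) \<le> a"
proof -
  assume a: "a \<ge> 0"
  have "norm (complex_of_real a * zz ^ k) = a * norm zz ^ k"
    using a by (simp add: norm_mult norm_power)
  also have "\<dots> \<le> a * 1"
    using a zz_le by (intro mult_left_mono) (auto intro: power_le_one)
  finally show ?thesis by simp
qed

lemma ring_aux: "((A::complex)*x + B*y) * z^(Suc k) = (z*A)*(x*z^k) + (z*B)*(y*z^k)"
  by (simp add: algebra_simps)

lemma ring_aux2:
  assumes h: "(D::complex)*Z = R"
  shows "D*((Z*A)*X + (Z*B)*E) = R*A*X + R*B*E"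
proof -
  have "D*((Z*A)*X + (Z*B)*E) = (D*Z)*A*X + (D*Z)*B*E" by (simp add: algebra_simps)
  then show ?thesis unfolding h .
qed

lemma rec0:
  "(complex_of_real (1 + \<rho>) + s) * estar \<rho> q 0 (Suc b) s =
     complex_of_real \<rho> * (\<Sum>j. complex_of_real ((1-q)*q^j) * estar \<rho> q (Suc j) (Suc b) s)
     + estar \<rho> q 0 b s"
proof -
  let ?P = "absorb_prob \<rho> q"
  note Pb = P_bounds[OF rho less_imp_le[OF q0] q1]
  note Ps = P_summable[OF rho less_imp_le[OF q0] q1]
  define c where "c k = complex_of_real (?P k 0 (Suc b)) * zz ^ k" for k
  have cs: "summable c" unfolding c_def by (rule summable_norm_cancel[OF estar_summable])
  define S where "S k = (\<Sum>j. (1-q)*q^j * ?P k (Suc j) (Suc b))" for k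
  have Ssum: "summable (\<lambda>j. (1-q)*q^j * ?P k (Suc j) (Suc b))" for k
    using wavg(1)[of q "\<lambda>j. ?P k (Suc j) (Suc b)"] Pb q0 q1 by auto
  have S0: "S k \<ge> 0" for k
    unfolding S_def using wavg(2)[of q "\<lambda>j. ?P k (Suc j) (Suc b)"] Pb q0 q1 by auto
  have Pc: "?P (Suc k) 0 (Suc b) = \<rho>/(1+\<rho>) * S k + 1/(1+\<rho>) * ?P k 0 b" for k
    by (simp add: S_def)
  have SleP: "S k \<le> (1+\<rho>)/\<rho> * ?P (Suc k) 0 (Suc b)" for k
  proof -
    have "1/(1+\<rho>) * ?P k 0 b \<ge> 0" using Pb rho by simp
    then have "\<rho>/(1+\<rho>) * S k \<le> ?P (Suc k) 0 (Suc b)" using Pc[of k] by linarith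
    then have "(1+\<rho>)/\<rho> * (\<rho>/(1+\<rho>) * S k) \<le> (1+\<rho>)/\<rho> * ?P (Suc k) 0 (Suc b)"
      by (rule mult_left_mono) (use rho in simp)
    moreover have "(1+\<rho>)/\<rho> * (\<rho>/(1+\<rho>) * S k) = S k" using rho by simp
    ultimately show ?thesis by simp
  qed
  have Ssumm: "summable S"
  proof (rule summable_comparison_test'[where g="\<lambda>k. (1+\<rho>)/\<rho> * ?P (Suc k) 0 (Suc b)"])
    show "summable (\<lambda>k. (1+\<rho>)/\<rho> * ?P (Suc k) 0 (Suc b))"
      using Ps(1)[of 0 "Suc b"] summable_Suc_iff[of "\<lambda>k. ?P k 0 (Suc b)"] by (intro summable_mult) (simp del: absorb_prob.simps)
    show "norm (S k) \<le> (1+\<rho>)/\<rho> * ?P (Suc k) 0 (Suc b)" for k using SleP[of k] S0[of k] by simp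
  qed
  define X where "X = (\<Sum>j. complex_of_real ((1-q)*q^j) * estar \<rho> q (Suc j) (Suc b) s)"
  have SX_summ: "summable (\<lambda>k. complex_of_real (S k) * zz ^ k)"
    by (rule summable_norm_cancel, rule summable_comparison_test'[OF Ssumm]) (use norm_ofreal_zz S0 in auto)
  have SX: "(\<Sum>k. complex_of_real (S k) * zz ^ k) = X"
  proof -
    have "(\<Sum>k. complex_of_real (S k) * zz ^ k)
        = (\<Sum>k. \<Sum>j. complex_of_real ((1-q)*q^j * ?P k (Suc j) (Suc b)) * zz ^ k)"
    proof (rule suminf_cong)
      fix k
      have "complex_of_real (S k) = (\<Sum>j. complex_of_real ((1-q)*q^j * ?P k (Suc j) (Suc b)))"
        unfolding S_def by (rule suminf_of_real[OF Ssum])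
      then show "complex_of_real (S k) * zz ^ k = (\<Sum>j. complex_of_real ((1-q)*q^j * ?P k (Suc j) (Suc b)) * zz ^ k)"
        using suminf_mult2[OF summable_of_real[OF Ssum[of k]], of "zz ^ k"] by simp
    qed
    also have "\<dots> = (\<Sum>j. \<Sum>k. complex_of_real ((1-q)*q^j * ?P k (Suc j) (Suc b)) * zz ^ k)"
    proof (rule swap_suminf[where g="\<lambda>k j. (1-q)*q^j * ?P k (Suc j) (Suc b)"])
      show "norm (complex_of_real ((1-q)*q^j * ?P k (Suc j) (Suc b)) * zz ^ k) \<le> (1-q)*q^j * ?P k (Suc j) (Suc b)" for k j
        using Pb q0 q1 by (intro norm_ofreal_zz) auto
      show "summable (\<lambda>j. (1-q)*q^j * ?P k (Suc j) (Suc b))" for k by (rule Ssum)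
      show "summable (\<lambda>k. \<Sum>j. (1-q)*q^j * ?P k (Suc j) (Suc b))" using Ssumm unfolding S_def by (simp only: )
    qed
    also have "\<dots> = X" unfolding X_def estar_def
    proof (rule suminf_cong)
      fix j
      have "(\<Sum>k. complex_of_real ((1-q)*q^j) * (complex_of_real (?P k (Suc j) (Suc b)) * zz ^ k))
          = complex_of_real ((1-q)*q^j) * (\<Sum>k. complex_of_real (?P k (Suc j) (Suc b)) * zz ^ k)"
        by (rule suminf_mult[OF summable_norm_cancel[OF estar_summable]])
      then show "(\<Sum>k. complex_of_real ((1-q)*q^j * ?P k (Suc j) (Suc b)) * zz ^ k)
          = complex_of_real ((1-q)*q^j) * (\<Sum>k. complex_of_real (?P k (Suc j) (Suc b)) * zz ^ k)"
        by (simp add: mult.assoc)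
    qed
    finally show ?thesis .
  qed
  have ces: "(\<lambda>k. complex_of_real (?P k 0 b) * zz ^ k) sums estar \<rho> q 0 b s"
    unfolding estar_def by (rule summable_sums[OF summable_norm_cancel[OF estar_summable]])
  have cSuc: "c (Suc k) = (zz * complex_of_real (\<rho>/(1+\<rho>))) * (complex_of_real (S k) * zz ^ k)
        + (zz * complex_of_real (1/(1+\<rho>))) * (complex_of_real (?P k 0 b) * zz ^ k)" for k
    unfolding c_def Pc of_real_add of_real_mult by (rule ring_aux)
  define L where "L = (zz * complex_of_real (\<rho>/(1+\<rho>))) * X + (zz * complex_of_real (1/(1+\<rho>))) * estar \<rho> q 0 b s"
  have SXs: "(\<lambda>k. complex_of_real (S k) * zz ^ k) sums X"
    using summable_sums[OF SX_summ] unfolding SX .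
  have "(\<lambda>k. c (Suc k)) sums L"
    unfolding cSuc L_def by (intro sums_add sums_mult ces SXs)
  then have "c sums (L + c 0)" by (simp only: sums_Suc_iff)
  moreover have "c 0 = 0" by (simp add: c_def)
  ultimately have cL: "c sums L" by simp
  have "estar \<rho> q 0 (Suc b) s = suminf c"
    unfolding estar_def by (rule arg_cong[where f=suminf]) (simp add: c_def fun_eq_iff)
  then have E: "estar \<rho> q 0 (Suc b) s = (zz * complex_of_real (\<rho>/(1+\<rho>))) * X + (zz * complex_of_real (1/(1+\<rho>))) * estar \<rho> q 0 b s"
    using sums_unique[OF cL] unfolding L_def by simp
  have d: "complex_of_real (1 + \<rho>) + s \<noteq> 0" by (rule den_nz)
  have r: "complex_of_real (1 + \<rho>) \<noteq> 0" 
  proof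
    assume "complex_of_real (1 + \<rho>) = 0"
    then have "1 + \<rho> = 0" using of_real_eq_0_iff by blast
    then show False using rho by linarith
  qed
  have "(complex_of_real (1 + \<rho>) + s) * zz = complex_of_real (1 + \<rho>)" using d by simp
  then have "(complex_of_real (1 + \<rho>) + s) * estar \<rho> q 0 (Suc b) s
     = complex_of_real (1 + \<rho>) * complex_of_real (\<rho>/(1+\<rho>)) * X + complex_of_real (1 + \<rho>) * complex_of_real (1/(1+\<rho>)) * estar \<rho> q 0 b s"
    unfolding E by (rule ring_aux2)
  also have "\<dots> = complex_of_real \<rho> * X + estar \<rho> q 0 b s"
  proof -
    have h1: "(1+\<rho>)*(\<rho>/(1+\<rho>)) = \<rho>" and h2: "(1+\<rho>)*(1/(1+\<rho>)) = 1" using rho by simp_all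
    have "complex_of_real (1+\<rho>) * complex_of_real (\<rho>/(1+\<rho>)) = complex_of_real \<rho>"
      by (metis h1 of_real_mult)
    moreover have "complex_of_real (1+\<rho>) * complex_of_real (1/(1+\<rho>)) = 1"
      by (metis h2 of_real_mult of_real_1)
    ultimately show ?thesis by simp
  qed
  finally show ?thesis unfolding X_def .
qed


lemma row_term_le: "norm (estar \<rho> q n (Suc b) s * u ^ n * v ^ Suc b) \<le> norm u ^ n * norm v ^ Suc b"
proof -
  have "norm (estar \<rho> q n (Suc b) s * u ^ n * v ^ Suc b) = norm (estar \<rho> q n (Suc b) s) * (norm u ^ n * norm v ^ Suc b)"
    by (simp add: norm_mult norm_power)
  also have "\<dots> \<le> 1 * (norm u ^ n * norm v ^ Suc b)"
    by (rule mult_right_mono[OF estar_le]) simp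
  finally show ?thesis by simp
qed

lemma geo_suc_summable: "norm (v::complex) < 1 \<Longrightarrow> summable (\<lambda>b. norm u ^ n * norm v ^ Suc b)"
  by (intro summable_mult) (simp add: summable_Suc_iff[of "\<lambda>b. norm v ^ b"])

lemma row_summable: "norm v < 1 \<Longrightarrow> summable (\<lambda>b. estar \<rho> q n (Suc b) s * u ^ n * v ^ Suc b)"
  by (rule summable_norm_cancel, rule summable_comparison_test'[OF geo_suc_summable]) (use row_term_le in auto)

lemma row_bound:
  assumes v: "norm v < 1"
  shows "norm (Rw \<rho> q s u v n) \<le> norm u ^ n * (1 / (1 - norm v))"
proof -
  have s1: "summable (\<lambda>b. norm (estar \<rho> q n (Suc b) s * u ^ n * v ^ Suc b))"
    by (rule summable_comparison_test'[OF geo_suc_summable[OF v]]) (use row_term_le in auto)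
  have "norm (Rw \<rho> q s u v n) \<le> (\<Sum>b. norm (estar \<rho> q n (Suc b) s * u ^ n * v ^ Suc b))"
    unfolding Rw_def by (rule summable_norm[OF s1])
  also have "\<dots> \<le> (\<Sum>b. norm u ^ n * norm v ^ Suc b)"
    by (rule suminf_le[OF _ s1 geo_suc_summable[OF v]]) (use row_term_le in auto)
  also have "\<dots> = norm u ^ n * (\<Sum>b. norm v ^ Suc b)"
    by (rule suminf_mult) (simp add: v summable_Suc_iff[of "\<lambda>b. norm v ^ b"])
  also have "(\<Sum>b. norm v ^ Suc b) \<le> (\<Sum>b. norm v ^ b)"
    by (rule suminf_le) (use v in \<open>auto simp: summable_Suc_iff[of "\<lambda>b. norm v ^ b"] intro: mult_left_le_one_le\<close>)
  also have "(\<Sum>b. norm v ^ b) = 1 / (1 - norm v)" using suminf_geometric[of "norm v"] v by simp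
  finally show ?thesis by (simp add: mult_left_mono)
qed

lemma Rw_summable:
  assumes "norm u < 1" "norm v < 1"
  shows "summable (Rw \<rho> q s u v)"
proof (rule summable_norm_cancel, rule summable_comparison_test'[where g="\<lambda>n. norm u ^ n * (1 / (1 - norm v))"])
  show "summable (\<lambda>n. norm u ^ n * (1 / (1 - norm v)))"
    using assms by (intro summable_mult2) simp
  show "norm (norm (Rw \<rho> q s u v n)) \<le> norm u ^ n * (1 / (1 - norm v))" for n
    using row_bound[OF assms(2)] by simp
qed

lemma Egf_split:
  assumes "norm u < 1" "norm v < 1"
  shows "Egf \<rho> q s u v = (\<Sum>b. estar \<rho> q 0 (Suc b) s * v ^ Suc b) + (\<Sum>n. Rw \<rho> q s u v (Suc n))"
  unfolding Egf_Rw suminf_split_head[OF Rw_summable[OF assms]] by (simp add: Rw_def)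


lemma nQ: "norm (complex_of_real q) < 1" using q0 q1 by simp

lemma E0_summable: "summable (\<lambda>b. estar \<rho> q 0 (Suc b) s * complex_of_real q ^ Suc b)"
  using row_summable[OF nQ, of 0 1] by simp

lemma wsum: "(\<lambda>j. (1-q)*q^j) sums 1" by (rule geo_w) (use q0 q1 in auto)

lemma nrm_w: "norm (complex_of_real ((1-q)*q^j)) = (1-q)*q^j"
  by (subst norm_of_real) (use q0 q1 in simp)

lemma Xterm_le: "norm (complex_of_real ((1-q)*q^j) * estar \<rho> q (Suc j) b s) \<le> (1-q)*q^j"
proof -
  have "norm (complex_of_real ((1-q)*q^j) * estar \<rho> q (Suc j) b s) = (1-q)*q^j * norm (estar \<rho> q (Suc j) b s)"
    unfolding norm_mult nrm_w ..
  also have "\<dots> \<le> (1-q)*q^j * 1" using q0 q1 estar_le by (intro mult_left_mono) auto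
  finally show ?thesis by simp
qed

lemma X_summable: "summable (\<lambda>j. complex_of_real ((1-q)*q^j) * estar \<rho> q (Suc j) b s)"
proof (rule summable_norm_cancel, rule summable_comparison_test'[where g="\<lambda>j. (1-q)*q^j"])
  show "summable (\<lambda>j. (1-q)*q^j)" using geo_w[of q] q0 q1 sums_summable by auto
  show "norm (norm (complex_of_real ((1-q)*q^j) * estar \<rho> q (Suc j) b s)) \<le> (1-q)*q^j" for j
    using Xterm_le by simp
qed

lemma X_le: "norm (\<Sum>j. complex_of_real ((1-q)*q^j) * estar \<rho> q (Suc j) b s) \<le> 1"
proof -
  have s1: "summable (\<lambda>j. norm (complex_of_real ((1-q)*q^j) * estar \<rho> q (Suc j) b s))"
  proof (rule summable_comparison_test'[where g="\<lambda>j. (1-q)*q^j"])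
    show "summable (\<lambda>j. (1-q)*q^j)" using geo_w[of q] q0 q1 sums_summable by auto
    show "norm (norm (complex_of_real ((1-q)*q^j) * estar \<rho> q (Suc j) b s)) \<le> (1-q)*q^j" for j
      using Xterm_le by simp
  qed
  have "norm (\<Sum>j. complex_of_real ((1-q)*q^j) * estar \<rho> q (Suc j) b s)
      \<le> (\<Sum>j. norm (complex_of_real ((1-q)*q^j) * estar \<rho> q (Suc j) b s))"
    by (rule summable_norm[OF s1])
  also have "\<dots> \<le> (\<Sum>j. (1-q)*q^j)"
  proof (rule suminf_le[OF _ s1])
    show "summable (\<lambda>j. (1-q)*q^j)" using geo_w[of q] q0 q1 sums_summable by auto
    show "norm (complex_of_real ((1-q)*q^j) * estar \<rho> q (Suc j) b s) \<le> (1-q)*q^j" for j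
      using Xterm_le by simp
  qed
  also have "\<dots> = 1" using wsum by (simp add: sums_iff)
  finally show ?thesis .
qed


lemma S1_sums:
  "(\<lambda>b. (\<Sum>j. complex_of_real ((1-q)*q^j) * estar \<rho> q (Suc j) (Suc b) s) * complex_of_real q ^ Suc b)
     sums (complex_of_real ((1-q)/q) * (Egf \<rho> q s (complex_of_real q) (complex_of_real q)
            - (\<Sum>b. estar \<rho> q 0 (Suc b) s * complex_of_real q ^ Suc b)))"
proof -
  let ?Q = "complex_of_real q"
  define F where "F b j = complex_of_real ((1-q)*q^j) * estar \<rho> q (Suc j) (Suc b) s * ?Q ^ Suc b" for b j
  define g where "g b j = (1-q)*q^j * q ^ Suc b" for b j
  have summ: "summable (\<lambda>b. (\<Sum>j. complex_of_real ((1-q)*q^j) * estar \<rho> q (Suc j) (Suc b) s) * ?Q ^ Suc b)"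
  proof (rule summable_norm_cancel, rule summable_comparison_test'[where g="\<lambda>b. q ^ Suc b"])
    show "summable (\<lambda>b. q ^ Suc b)" using q0 q1 by (simp add: summable_Suc_iff[of "\<lambda>b. q ^ b"])
    show "norm (norm ((\<Sum>j. complex_of_real ((1-q)*q^j) * estar \<rho> q (Suc j) (Suc b) s) * ?Q ^ Suc b)) \<le> q ^ Suc b" for b
    proof -
      have "norm ((\<Sum>j. complex_of_real ((1-q)*q^j) * estar \<rho> q (Suc j) (Suc b) s) * ?Q ^ Suc b)
          = norm (\<Sum>j. complex_of_real ((1-q)*q^j) * estar \<rho> q (Suc j) (Suc b) s) * q ^ Suc b"
        using q0 by (simp add: norm_mult norm_power)
      also have "\<dots> \<le> 1 * q ^ Suc b" using X_le q0 by (intro mult_right_mono) auto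
      finally show ?thesis by simp
    qed
  qed
  have "(\<Sum>b. (\<Sum>j. complex_of_real ((1-q)*q^j) * estar \<rho> q (Suc j) (Suc b) s) * ?Q ^ Suc b)
      = (\<Sum>b. \<Sum>j. F b j)"
    unfolding F_def by (rule suminf_cong) (rule suminf_mult2[OF X_summable])
  also have "\<dots> = (\<Sum>j. \<Sum>b. F b j)"
  proof (rule swap_suminf[where g=g])
    show "norm (F b j) \<le> g b j" for b j
    proof -
      have "norm (F b j) = norm (complex_of_real ((1-q)*q^j) * estar \<rho> q (Suc j) (Suc b) s) * q ^ Suc b"
        unfolding F_def using q0 by (simp add: norm_mult norm_power)
      also have "\<dots> \<le> (1-q)*q^j * q ^ Suc b" using Xterm_le q0 by (intro mult_right_mono) auto
      finally show ?thesis unfolding g_def .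
    qed
    show "summable (g b)" for b unfolding g_def by (rule summable_mult2[OF sums_summable[OF wsum]])
    have "suminf (g b) = q ^ Suc b" for b
      unfolding g_def using suminf_mult2[OF sums_summable[OF wsum], of "q ^ Suc b"] wsum
      by (simp add: sums_iff)
    then show "summable (\<lambda>b. suminf (g b))"
      using q0 q1 by (simp add: summable_Suc_iff[of "\<lambda>b. q ^ b"])
  qed
  also have "\<dots> = (\<Sum>j. complex_of_real ((1-q)/q) * Rw \<rho> q s ?Q ?Q (Suc j))"
  proof (rule suminf_cong)
    fix j
    have w: "complex_of_real ((1-q)*q^j) = complex_of_real ((1-q)/q) * ?Q ^ Suc j"
    proof -
      have "(1-q)*q^j = (1-q)/q * q ^ Suc j" using q0 by simp
      then show ?thesis by (metis of_real_mult of_real_power)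
    qed
    have "(\<Sum>b. F b j) = (\<Sum>b. complex_of_real ((1-q)/q) * (estar \<rho> q (Suc j) (Suc b) s * ?Q ^ Suc j * ?Q ^ Suc b))"
      unfolding F_def w by (simp add: mult_ac)
    also have "\<dots> = complex_of_real ((1-q)/q) * Rw \<rho> q s ?Q ?Q (Suc j)"
      unfolding Rw_def by (rule suminf_mult[OF row_summable[OF nQ]])
    finally show "(\<Sum>b. F b j) = complex_of_real ((1-q)/q) * Rw \<rho> q s ?Q ?Q (Suc j)" .
  qed
  also have "\<dots> = complex_of_real ((1-q)/q) * (\<Sum>j. Rw \<rho> q s ?Q ?Q (Suc j))"
    by (rule suminf_mult) (use Rw_summable[OF nQ nQ] in \<open>simp only: summable_Suc_iff\<close>)
  finally have sumeq: "(\<Sum>b. (\<Sum>j. complex_of_real ((1-q)*q^j) * estar \<rho> q (Suc j) (Suc b) s) * ?Q ^ Suc b)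
      = complex_of_real ((1-q)/q) * (\<Sum>j. Rw \<rho> q s ?Q ?Q (Suc j))" .
  have Rweq: "(\<Sum>j. Rw \<rho> q s ?Q ?Q (Suc j)) = Egf \<rho> q s ?Q ?Q - (\<Sum>b. estar \<rho> q 0 (Suc b) s * ?Q ^ Suc b)"
    using Egf_split[OF nQ nQ] by simp
  from summable_sums[OF summ] show ?thesis unfolding sumeq Rweq .
qed


lemma key_eq:
  defines "E0 \<equiv> (\<Sum>b. estar \<rho> q 0 (Suc b) s * complex_of_real q ^ Suc b)"
    and "G \<equiv> Egf \<rho> q s (complex_of_real q) (complex_of_real q)"
  shows "(complex_of_real (1 + \<rho>) + s) * E0
     = complex_of_real \<rho> * (complex_of_real ((1-q)/q) * (G - E0)) + (complex_of_real q + complex_of_real q * E0)"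
proof -
  let ?Q = "complex_of_real q"
  define X where "X b = (\<Sum>j. complex_of_real ((1-q)*q^j) * estar \<rho> q (Suc j) (Suc b) s)" for b
  have E0s: "(\<lambda>b. estar \<rho> q 0 (Suc b) s * ?Q ^ Suc b) sums E0"
    unfolding E0_def by (rule summable_sums[OF E0_summable])
  have L: "(\<lambda>b. (complex_of_real (1 + \<rho>) + s) * (estar \<rho> q 0 (Suc b) s * ?Q ^ Suc b))
      sums ((complex_of_real (1 + \<rho>) + s) * E0)"
    by (rule sums_mult[OF E0s])
  have T1: "(\<lambda>b. complex_of_real \<rho> * (X b * ?Q ^ Suc b)) sums (complex_of_real \<rho> * (complex_of_real ((1-q)/q) * (G - E0)))"
    unfolding X_def G_def E0_def by (rule sums_mult[OF S1_sums])
  have T2: "(\<lambda>b. estar \<rho> q 0 b s * ?Q ^ Suc b) sums (?Q + ?Q * E0)"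
  proof -
    have "(\<lambda>b. estar \<rho> q 0 (Suc b) s * ?Q ^ Suc (Suc b)) sums (?Q * E0)"
    proof -
      have "(\<lambda>b. ?Q * (estar \<rho> q 0 (Suc b) s * ?Q ^ Suc b)) sums (?Q * E0)" by (rule sums_mult[OF E0s])
      moreover have "(\<lambda>b. ?Q * (estar \<rho> q 0 (Suc b) s * ?Q ^ Suc b)) = (\<lambda>b. estar \<rho> q 0 (Suc b) s * ?Q ^ Suc (Suc b))"
        by (simp add: mult_ac)
      ultimately show ?thesis by simp
    qed
    then have "(\<lambda>b. estar \<rho> q 0 b s * ?Q ^ Suc b) sums (?Q * E0 + estar \<rho> q 0 0 s * ?Q ^ Suc 0)"
      by (rule iffD1[OF sums_Suc_iff])
    then show ?thesis by (simp add: estar_0 add.commute)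
  qed
  have "(\<lambda>b. complex_of_real \<rho> * (X b * ?Q ^ Suc b) + estar \<rho> q 0 b s * ?Q ^ Suc b)
      sums (complex_of_real \<rho> * (complex_of_real ((1-q)/q) * (G - E0)) + (?Q + ?Q * E0))"
    by (rule sums_add[OF T1 T2])
  moreover have "(\<lambda>b. complex_of_real \<rho> * (X b * ?Q ^ Suc b) + estar \<rho> q 0 b s * ?Q ^ Suc b)
      = (\<lambda>b. (complex_of_real (1 + \<rho>) + s) * (estar \<rho> q 0 (Suc b) s * ?Q ^ Suc b))"
  proof
    fix b
    have "(complex_of_real (1 + \<rho>) + s) * (estar \<rho> q 0 (Suc b) s * ?Q ^ Suc b)
        = ((complex_of_real (1 + \<rho>) + s) * estar \<rho> q 0 (Suc b) s) * ?Q ^ Suc b" by (simp only: mult.assoc)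
    also have "\<dots> = (complex_of_real \<rho> * X b + estar \<rho> q 0 b s) * ?Q ^ Suc b"
      unfolding rec0 X_def ..
    also have "\<dots> = complex_of_real \<rho> * (X b * ?Q ^ Suc b) + estar \<rho> q 0 b s * ?Q ^ Suc b"
      by (simp only: distrib_right mult.assoc)
    finally show "complex_of_real \<rho> * (X b * ?Q ^ Suc b) + estar \<rho> q 0 b s * ?Q ^ Suc b
        = (complex_of_real (1 + \<rho>) + s) * (estar \<rho> q 0 (Suc b) s * ?Q ^ Suc b)" by simp
  qed
  ultimately have "(\<lambda>b. (complex_of_real (1 + \<rho>) + s) * (estar \<rho> q 0 (Suc b) s * ?Q ^ Suc b))
      sums (complex_of_real \<rho> * (complex_of_real ((1-q)/q) * (G - E0)) + (?Q + ?Q * E0))" by simp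
  from sums_unique2[OF L this] show ?thesis .
qed

end


lemma alg:
  fixes rr qq ss E0 G G' :: complex
  assumes hr: "rr \<noteq> 0" and hq: "qq \<noteq> 0" and rQ: "rr + qq \<noteq> 0" and D: "qq + rr + qq * ss - qq^2 \<noteq> 0"
    and key: "(1+rr+ss)*E0 = rr*((1-qq)/qq*(G-E0)) + (qq + qq*E0)"
  shows "(1-rr-qq)/qq*E0 + (1-rr-qq)*rr/(qq*(rr+qq))*(G'-E0)
     = (1-rr-qq)/(qq*(rr+qq)) * (rr^2*((G'-G)/rr) + (qq^3 + rr*(qq * ss + (rr+2*qq*(1-qq)))*G)/((qq+rr) + qq * ss - qq^2))"
proof -
  have k1: "qq*(rr*((1-qq)/qq*(G-E0))) = rr*(1-qq)*(G-E0)" using hq by simp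
  have "qq*((1+rr+ss)*E0) = qq*(rr*((1-qq)/qq*(G-E0))) + qq*qq + qq*qq*E0" unfolding key by (simp add: algebra_simps)
  then have k2: "qq*((1+rr+ss)*E0) = rr*(1-qq)*(G-E0) + qq*qq + qq*qq*E0" unfolding k1 .
  have "E0 * (qq + rr + qq * ss - qq^2) - (qq^2 + rr*(1-qq)*G) = qq*((1+rr+ss)*E0) - (rr*(1-qq)*(G-E0) + qq*qq + qq*qq*E0)"
    by (simp add: algebra_simps power2_eq_square)
  then have "E0 * (qq + rr + qq * ss - qq^2) = qq^2 + rr*(1-qq)*G" using k2 by simp
  then have ED: "E0 * ((qq+rr) + qq * ss - qq^2) = qq^2 + rr*(1-qq)*G" by simp
  have Dd: "(qq+rr) + qq * ss - qq^2 \<noteq> 0" using D by simp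
  have h1: "rr^2*((G'-G)/rr) = rr*(G'-G)" using hr by (simp add: power2_eq_square)
  have h2: "(1-rr-qq)/qq*E0 + (1-rr-qq)*rr/(qq*(rr+qq))*(G'-E0) = (1-rr-qq)/(qq*(rr+qq)) * (qq*E0 + rr*G')"
  proof -
    define c where "c = (1-rr-qq)/(qq*(rr+qq))"
    have a1: "(1-rr-qq)/qq = c * (rr+qq)" unfolding c_def using rQ hq by simp
    have a2: "(1-rr-qq)*rr/(qq*(rr+qq)) = c * rr" unfolding c_def by simp
    have "c * (rr+qq) * E0 + c * rr * (G'-E0) = c * (qq*E0 + rr*G')" by (simp add: algebra_simps)
    then show ?thesis unfolding a1 a2 c_def .
  qed
  have "(qq^3 + rr*(qq * ss + (rr+2*qq*(1-qq)))*G) - (qq*E0 + rr*G)*((qq+rr) + qq * ss - qq^2)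
      = qq*(qq^2 + rr*(1-qq)*G - E0 * ((qq+rr) + qq * ss - qq^2))"
    by (simp add: algebra_simps power2_eq_square power3_eq_cube)
  then have "qq^3 + rr*(qq * ss + (rr+2*qq*(1-qq)))*G = (qq*E0 + rr*G)*((qq+rr) + qq * ss - qq^2)" using ED by simp
  then have h3: "(qq^3 + rr*(qq * ss + (rr+2*qq*(1-qq)))*G)/((qq+rr) + qq * ss - qq^2) = qq*E0 + rr*G"
    using Dd by simp
  define c where "c = (1-rr-qq)/(qq*(rr+qq))"
  have "c * (qq*E0 + rr*G') = c * (rr*(G'-G) + (qq*E0 + rr*G))" by (simp add: algebra_simps)
  then show ?thesis unfolding h1 h2 h3 c_def .
qed


lemma mul_aux1: "A*B = K*(X*Y) \<Longrightarrow> (e::complex)*A*B = K*(e*X*Y)"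
proof -
  assume h: "A*B = K*(X*Y)"
  have "e*A*B = e*(A*B)" by (simp only: mult.assoc)
  also have "\<dots> = e*(K*(X*Y))" by (simp only: h)
  also have "\<dots> = K*(e*X*Y)" by (simp only: mult_ac)
  finally show ?thesis .
qed

lemma mul_aux2: "A*B = K*Y \<Longrightarrow> (e::complex)*A*B = K*(e*Y)"
proof -
  assume h: "A*B = K*Y"
  have "e*A*B = e*(A*B)" by (simp only: mult.assoc)
  also have "\<dots> = e*(K*Y)" by (simp only: h)
  also have "\<dots> = K*(e*Y)" by (simp only: mult_ac)
  finally show ?thesis .
qed

theorem mainTheorem1:
  fixes \<rho> q :: real and s :: complex
  assumes "\<rho> > 0" and "0 < q" and "q < 1" and "\<rho> + q < 1" and "Re s \<ge> 0"
  shows "stat_LT \<rho> q s =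
    complex_of_real ((1 - \<rho> - q) / (q * (\<rho> + q))) *
      (complex_of_real (\<rho> ^ 2) * Fgf \<rho> q s (complex_of_real (\<rho> + q)) (complex_of_real q)
       + (complex_of_real (q ^ 3)
          + complex_of_real \<rho> * (complex_of_real q * s + complex_of_real (\<rho> + 2 * q * (1 - q)))
            * Egf \<rho> q s (complex_of_real q) (complex_of_real q))
         / (complex_of_real (q + \<rho>) + complex_of_real q * s - complex_of_real (q ^ 2)))"
proof -
  note A = assms(1,2,3,5)
  let ?Q = "complex_of_real q" and ?U = "complex_of_real (\<rho> + q)"
  define E0 where "E0 = (\<Sum>b. estar \<rho> q 0 (Suc b) s * ?Q ^ Suc b)"
  define G where "G = Egf \<rho> q s ?Q ?Q"
  define G' where "G' = Egf \<rho> q s ?U ?Q"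
  have nQ: "norm ?Q < 1" using assms by simp
  have nU: "norm ?U < 1" using assms by (subst norm_of_real) simp
  have key: "(complex_of_real (1 + \<rho>) + s) * E0
     = complex_of_real \<rho> * (complex_of_real ((1-q)/q) * (G - E0)) + (?Q + ?Q * E0)"
    using key_eq[OF A] unfolding E0_def G_def .
  define K where "K = complex_of_real ((1-\<rho>-q)*\<rho>/(q*(\<rho>+q)))"
  define K0 where "K0 = complex_of_real ((1-\<rho>-q)/q)"
  define T where "T n = (\<Sum>b. estar \<rho> q n (Suc b) s * complex_of_real (stat_pmf \<rho> q n) * complex_of_real (batch_pmf q (Suc b)))" for n
  have stT: "stat_LT \<rho> q s = suminf T" unfolding stat_LT_def T_def ..
  have TS: "T (Suc n) = K * Rw \<rho> q s ?U ?Q (Suc n)" for n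
  proof -
    have r: "stat_pmf \<rho> q (Suc n) * batch_pmf q (Suc b) = (1-\<rho>-q)*\<rho>/(q*(\<rho>+q)) * ((\<rho>+q) ^ Suc n * q ^ Suc b)" for b
    proof -
      have q1: "1 - q \<noteq> 0" and qn: "q * (\<rho> + q) \<noteq> 0" using assms by auto
      define a where "a = 1 - \<rho>/(1-q)"
      define P where "P = (\<rho>+q)^n * q^b"
      have e1: "a*(1-q) = 1-\<rho>-q" unfolding a_def using q1 by (simp add: field_simps)
      have "stat_pmf \<rho> q (Suc n) * batch_pmf q (Suc b) = a*\<rho>*(\<rho>+q)^n*((1-q)*q^b)"
        unfolding stat_pmf_def batch_pmf_def a_def by simp
      also have "\<dots> = (a*(1-q))*\<rho>*P" unfolding P_def by (simp only: mult_ac)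
      also have "\<dots> = (1-\<rho>-q)*\<rho>/(q*(\<rho>+q)) * ((q*(\<rho>+q)) * P)" unfolding e1 using qn by simp
      also have "(q*(\<rho>+q)) * P = (\<rho>+q) ^ Suc n * q ^ Suc b" unfolding P_def by (simp only: power_Suc mult_ac)
      finally show ?thesis .
    qed
    have c: "complex_of_real (stat_pmf \<rho> q (Suc n)) * complex_of_real (batch_pmf q (Suc b)) = K * (?U ^ Suc n * ?Q ^ Suc b)" for b
      unfolding K_def by (simp only: of_real_mult[symmetric] of_real_power[symmetric] r)
    have "T (Suc n) = (\<Sum>b. K * (estar \<rho> q (Suc n) (Suc b) s * ?U ^ Suc n * ?Q ^ Suc b))"
      unfolding T_def by (rule suminf_cong) (rule mul_aux1[OF c])
    also have "\<dots> = K * Rw \<rho> q s ?U ?Q (Suc n)"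
      unfolding Rw_def by (rule suminf_mult[OF row_summable[OF A nQ]])
    finally show ?thesis .
  qed
  have T0: "T 0 = K0 * E0"
  proof -
    have r: "stat_pmf \<rho> q 0 * batch_pmf q (Suc b) = (1-\<rho>-q)/q * q ^ Suc b" for b
    proof -
      have q1: "1 - q \<noteq> 0" and qn: "q \<noteq> 0" using assms by auto
      define a where "a = 1 - \<rho>/(1-q)"
      have e1: "a*(1-q) = 1-\<rho>-q" unfolding a_def using q1 by (simp add: field_simps)
      have "stat_pmf \<rho> q 0 * batch_pmf q (Suc b) = a*((1-q)*q^b)"
        unfolding stat_pmf_def batch_pmf_def a_def by simp
      also have "\<dots> = (a*(1-q))*q^b" by (simp only: mult_ac)
      also have "\<dots> = (1-\<rho>-q)/q * (q * q^b)" unfolding e1 using qn by simp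
      also have "q * q^b = q ^ Suc b" by simp
      finally show ?thesis .
    qed
    have c: "complex_of_real (stat_pmf \<rho> q 0) * complex_of_real (batch_pmf q (Suc b)) = K0 * ?Q ^ Suc b" for b
      unfolding K0_def by (simp only: of_real_mult[symmetric] of_real_power[symmetric] r)
    have "T 0 = (\<Sum>b. K0 * (estar \<rho> q 0 (Suc b) s * ?Q ^ Suc b))"
      unfolding T_def by (rule suminf_cong) (rule mul_aux2[OF c])
    also have "\<dots> = K0 * E0"
      unfolding E0_def by (rule suminf_mult[OF E0_summable[OF A]])
    finally show ?thesis .
  qed
  have RS: "summable (\<lambda>n. Rw \<rho> q s ?U ?Q (Suc n))"
    using Rw_summable[OF A nU nQ] by (simp only: summable_Suc_iff)
  have TSs: "summable (\<lambda>n. T (Suc n))" unfolding TS by (rule summable_mult[OF RS])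
  have Ts: "summable T" using TSs by (simp only: summable_Suc_iff)
  have "suminf T = T 0 + (\<Sum>n. T (Suc n))" using suminf_split_head[OF Ts] by simp
  also have "(\<Sum>n. T (Suc n)) = K * (\<Sum>n. Rw \<rho> q s ?U ?Q (Suc n))"
    unfolding TS by (rule suminf_mult[OF RS])
  also have "(\<Sum>n. Rw \<rho> q s ?U ?Q (Suc n)) = G' - E0"
    using Egf_split[OF A nU nQ] unfolding G'_def E0_def by simp
  finally have stat: "stat_LT \<rho> q s = K0 * E0 + K * (G' - E0)" unfolding stT T0 .
  have UQ: "?U \<noteq> ?Q" using assms by simp
  have F: "Fgf \<rho> q s ?U ?Q = (G' - G) / complex_of_real \<rho>"
    unfolding Fgf_def G_def G'_def using UQ by simp
  define r where "r = complex_of_real \<rho>"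
  define Q where "Q = complex_of_real q"
  have r0: "r \<noteq> 0" unfolding r_def using assms by simp
  have Q0: "Q \<noteq> 0" unfolding Q_def using assms by simp
  have rQ: "r + Q \<noteq> 0" unfolding r_def Q_def using assms
    by (metis add_pos_pos less_numeral_extra(3) of_real_add of_real_eq_0_iff)
  have D: "Q + r + Q * s - Q^2 \<noteq> 0"
  proof
    assume h: "Q + r + Q * s - Q^2 = 0"
    have "Re (Q + r + Q * s - Q^2) = q + \<rho> + q * Re s - q^2"
      unfolding Q_def r_def by (simp add: power2_eq_square)
    moreover have "q * Re s \<ge> 0" using assms by simp
    moreover have "q - q^2 > 0" using assms by (simp add: power2_eq_square)
    ultimately have "Re (Q + r + Q * s - Q^2) > 0" using assms by linarith
    then show False using h by simp
  qed
  have key': "(1+r+s)*E0 = r*((1-Q)/Q*(G-E0)) + (Q + Q*E0)"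
    using key unfolding r_def Q_def by simp
  have main: "(1-r-Q)/Q*E0 + (1-r-Q)*r/(Q*(r+Q))*(G'-E0)
     = (1-r-Q)/(Q*(r+Q)) * (r^2*((G'-G)/r) + (Q^3 + r*(Q * s + (r+2*Q*(1-Q)))*G)/((Q+r) + Q * s - Q^2))"
    by (rule alg[OF r0 Q0 rQ D key'])
  show ?thesis unfolding stat F K_def K0_def using main unfolding r_def Q_def G_def by simp
qed

end
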